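(* Let $M$ and $F \geq 2$ be positive integers, $N = MF$, and let $u_l(0),\dots,u_l(M-1)$ be real numbers. Consider the zero-order hold fast-rate input $u_h(mF + i) = u_l(m)$ for all $m\in\{0,\dots,M-1\}$ and $i \in \{0,\dots,F-1\}$, with $u_h(k) = 0$ for $k<0$. Let $P \in \{1,\dots,N\}$ with $P > 2$, and let $\Phi\in\mathbb{R}^{M\times P}$ be the regressor matrix with entries $\Phi_{m,i} = u_h(mF - i)$ for $m=0,\dots,M-1$, $i=0,\dots,P-1$. Then the fast-rate FIR model of order $P$ is not unique, i.e., there exist $\theta\neq\theta^*\in\mathbb{R}^P$ with $\Phi(\theta-\theta^* )=0$.
   Context: A fast-rate FIR model of order $P$ with parameters $\theta = [\theta_0,\dots,\theta_{P-1}]^\top$ produces the fast-rate output $\hat y_h(n) = \sum_{i=0}^{P-1}\theta_i u_h(n-i)$; downsampling by factor $F$ gives the slow-rate output $\hat y_l(m) = \hat y_h(mF)$, $m=0,\dots,M-1$, so that $\hat y_l = \Phi\theta$ with $\Phi$ as in the claim. The fast-rate model is called unique (given $u_h$) if $\Phi(\theta-\theta^* )=0$ implies $\theta = \theta^*$. *)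

theory Defs
  imports Complex_Main
begin

text \<open>Zero-order hold fast-rate input, defined on all integers: zero for negative
  times, the held slow-rate value on 0..N-1, and (irrelevantly) zero afterwards.\<close>
definition zoh_input :: "nat \<Rightarrow> nat \<Rightarrow> (nat \<Rightarrow> real) \<Rightarrow> int \<Rightarrow> real" where
  "zoh_input M F ul k = (if k < 0 \<or> k \<ge> int (M * F) then 0 else ul (nat k div F))"

definition regressor :: "nat \<Rightarrow> (int \<Rightarrow> real) \<Rightarrow> nat \<Rightarrow> nat \<Rightarrow> real" where
  "regressor F uh m i = uh (int (m * F) - int i)"

end

theory Submission
  imports Defs
begin

lemma cols_eq:
  assumes "F \<ge> 2" and "m < M"
  shows "regressor F (zoh_input M F ul) m 1 = regressor F (zoh_input M F ul) m 2"
proof (cases "m = 0")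
  case True
  then show ?thesis by (simp add: regressor_def zoh_input_def)
next
  case False
  then obtain k where k: "m = Suc k" by (cases m) auto
  have F1: "int (m*F) - 1 = int (k*F + (F - 1))" using assms(1) k by (simp add: algebra_simps of_nat_diff)
  have F2: "int (m*F) - 2 = int (k*F + (F - 2))" using assms(1) k by (simp add: algebra_simps of_nat_diff)
  have d1: "(k*F + (F - 1)) div F = k"
  proof -
    have "(k*F + (F - 1)) div F = k + (F - 1) div F" using assms(1) by (intro div_mult_self3) simp
    also have "(F - 1) div F = 0" using assms(1) by simp
    finally show ?thesis by simp
  qed
  have d2: "(k*F + (F - 2)) div F = k"
  proof -
    have "(k*F + (F - 2)) div F = k + (F - 2) div F" using assms(1) by (intro div_mult_self3) simp
    also have "(F - 2) div F = 0" using assms(1) by simp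
    finally show ?thesis by simp
  qed
  have mF: "m * F \<le> M * F" using assms(2) by simp
  have l1: "k*F + (F - 1) < M * F" using mF k assms(1) by simp
  have l2: "k*F + (F - 2) < M * F" using mF k assms(1) by simp
  have e1: "zoh_input M F ul (int (m*F) - int 1) = ul k"
  proof -
    have "int (m*F) - int 1 = int (k*F + (F - 1))" using F1 by simp
    moreover have "\<not> int (M*F) \<le> int (k*F + (F - 1))" using l1 by linarith
    ultimately show ?thesis unfolding zoh_input_def by (simp only: nat_int d1 of_nat_less_0_iff if_False simp_thms)
  qed
  have e2: "zoh_input M F ul (int (m*F) - int 2) = ul k"
  proof -
    have "int (m*F) - int 2 = int (k*F + (F - 2))" using F2 by simp
    moreover have "\<not> int (M*F) \<le> int (k*F + (F - 2))" using l2 by linarith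
    ultimately show ?thesis unfolding zoh_input_def by (simp only: nat_int d2 of_nat_less_0_iff if_False simp_thms)
  qed
  show ?thesis unfolding regressor_def using e1 e2 by simp
qed

theorem lemma2:
  fixes M F P :: nat and ul :: "nat \<Rightarrow> real"
  assumes "M \<ge> 1" and "F \<ge> 2" and "1 \<le> P" and "P \<le> M * F" and "P > 2"
  shows "\<exists>\<theta> \<theta>s :: nat \<Rightarrow> real. (\<exists>i<P. \<theta> i \<noteq> \<theta>s i) \<and>
           (\<forall>m<M. (\<Sum>i<P. regressor F (zoh_input M F ul) m i * (\<theta> i - \<theta>s i)) = 0)"
proof -
  let ?t = "\<lambda>i::nat. if i = 1 then 1 else if i = 2 then -1 else (0::real)"
  show ?thesis
  proof (rule exI[of _ ?t], rule exI[of _ "\<lambda>_. 0"], intro conjI allI impI)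
  show "\<exists>i<P. ?t i \<noteq> (\<lambda>_. 0) i" using assms(5) by (intro exI[of _ 1]) auto
  fix m assume m: "m < M"
  let ?r = "regressor F (zoh_input M F ul) m"
  have "(\<Sum>i<P. ?r i * (?t i - 0)) = (\<Sum>i\<in>{1,2}. ?r i * ?t i)"
    unfolding diff_zero
  proof (rule sum.mono_neutral_right)
    show "finite {..<P}" by simp
    show "{1, 2} \<subseteq> {..<P}" using assms(5) by auto
    show "\<forall>i\<in>{..<P} - {1, 2}. ?r i * ?t i = 0" by simp
  qed
  also have "\<dots> = 0" using cols_eq[OF assms(2) m, of ul] by simp
  finally show "(\<Sum>i<P. ?r i * (?t i - (\<lambda>_. 0) i)) = 0" by simp
qed
qed

end
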